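(* Under the Setting below, let $\{x^k\}_{k\ge0}$ be generated by Algorithm 1 with extrapolation weights satisfying $0\le\omega_k\le\omega<1$. Then: (1) $\{x^k\}$ is bounded; (2) every cluster point of $\{x^k\}$ is a local minimizer of $H$; (3) $H(x^k)\to H(x^* )$, where $x^*$ is any cluster point of $\{x^k\}$; (4) if moreover $\omega_k\equiv\omega\in(0,1)$ for all $k$, then the whole sequence $\{x^k\}$ converges (to a local minimizer of $H$).
   Context: Setting. Let $\lambda>0$, $l,u\in\mathbb{R}^n$ with $l\le u$ componentwise, $X=\{x\in\mathbb{R}^n: l\le x\le u\}$, and $\delta_X$ the indicator function of $X$ ($0$ on $X$, $+\infty$ outside). For $x\in\mathbb{R}^n$, $\|x\|_0$ is the number of nonzero components of $x$ and $I(x)=\{i: x_i=0\}$. Let $f:\mathbb{R}^n\to\mathbb{R}$ be convex and differentiable, bounded from below on $X$, with $\nabla f$ $L$-Lipschitz continuous on $X$ ($L>0$). Define $H(x)=\lambda\|x\|_0+f(x)+\delta_X(x)$. Algorithm 1. Choose $\mu>0$, extrapolation weights $0\le\omega_k\le\omega<1$, and a starting point $x^0\in X$; set $x^{-1}=x^0$. For $k=0,1,2,\dots$: define $y^{k+1}\in\mathbb{R}^n$ by $y^{k+1}_i=x^k_i+\omega_k(x^k_i-x^{k-1}_i)$ for $i\notin I(x^k)$ and $y^{k+1}_i=x^k_i\,(=0)$ for $i\in I(x^k)$ (extrapolation only on the support of $x^k$); if $\langle y^{k+1}-x^k,\nabla f(y^{k+1})\rangle>0$ or $y^{k+1}\notin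 X$, reset $y^{k+1}:=x^k$; then take any $$x^{k+1}\in\arg\min_{x\in X}\ \lambda\|x\|_0+\frac{L}{2}\Big\|x-y^{k+1}+\frac1L\nabla f(y^{k+1})\Big\|^2+\frac{\mu}{2}\|x-y^{k+1}\|^2 .$$ A local minimizer of $H$ is a point $x^*\in X$ such that $H(x)\ge H(x^* )$ for all $x$ in some neighborhood of $x^*$. *)

theory Defs
  imports "HOL-Analysis.Analysis"
begin

definition box_set :: "real^'n \<Rightarrow> real^'n \<Rightarrow> (real^'n) set" where
  "box_set l u = {x. \<forall>i. l $ i \<le> x $ i \<and> x $ i \<le> u $ i}"

definition l0norm :: "real^'n \<Rightarrow> nat" where
  "l0norm x = card {i. x $ i \<noteq> 0}"

definition ind_fun :: "'a set \<Rightarrow> 'a \<Rightarrow> ereal" where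
  "ind_fun S x = (if x \<in> S then 0 else \<infinity>)"

definition Hfun :: "real \<Rightarrow> (real^'n \<Rightarrow> real) \<Rightarrow> real^'n \<Rightarrow> real^'n \<Rightarrow> real^'n \<Rightarrow> ereal" where
  "Hfun lam f l u x = ereal (lam * real (l0norm x) + f x) + ind_fun (box_set l u) x"

definition local_minimizer :: "(real^'n \<Rightarrow> ereal) \<Rightarrow> (real^'n) set \<Rightarrow> real^'n \<Rightarrow> bool" where
  "local_minimizer H X xs \<longleftrightarrow> xs \<in> X \<and> (\<exists>e>0. \<forall>x. dist x xs < e \<longrightarrow> H x \<ge> H xs)"

definition cluster_point :: "(nat \<Rightarrow> 'a::topological_space) \<Rightarrow> 'a \<Rightarrow> bool" where
  "cluster_point x p \<longleftrightarrow> (\<exists>r. strict_mono r \<and> (x \<circ> r) \<longlonglongrightarrow> p)"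

definition prev_it :: "(nat \<Rightarrow> 'a) \<Rightarrow> nat \<Rightarrow> 'a" where
  "prev_it x k = (if k = 0 then x 0 else x (k - 1))"

definition extrap :: "(nat \<Rightarrow> real) \<Rightarrow> (nat \<Rightarrow> real^'n) \<Rightarrow> nat \<Rightarrow> real^'n" where
  "extrap w x k = (\<chi> i. if x k $ i \<noteq> 0 then x k $ i + w k * (x k $ i - prev_it x k $ i) else x k $ i)"

text \<open>y^{k+1} after the possible reset.\<close>
definition y_it :: "(real^'n \<Rightarrow> real^'n) \<Rightarrow> (real^'n) set \<Rightarrow> (nat \<Rightarrow> real) \<Rightarrow> (nat \<Rightarrow> real^'n) \<Rightarrow> nat \<Rightarrow> real^'n" where
  "y_it g X w x k = (let y = extrap w x k in
     if inner (y - x k) (g y) > 0 \<or> y \<notin> X then x k else y)"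

definition sub_obj :: "real \<Rightarrow> real \<Rightarrow> real \<Rightarrow> (real^'n \<Rightarrow> real^'n) \<Rightarrow> real^'n \<Rightarrow> real^'n \<Rightarrow> real" where
  "sub_obj lam L mu g y z = lam * real (l0norm z) + L / 2 * (norm (z - y + (1 / L) *\<^sub>R g y))\<^sup>2
      + mu / 2 * (norm (z - y))\<^sup>2"

text \<open>x is a sequence generated by Algorithm 1 (with arbitrary choice of minimizer).\<close>
definition alg1_seq :: "real \<Rightarrow> (real^'n \<Rightarrow> real^'n) \<Rightarrow> real^'n \<Rightarrow> real^'n \<Rightarrow> real \<Rightarrow> real
     \<Rightarrow> (nat \<Rightarrow> real) \<Rightarrow> (nat \<Rightarrow> real^'n) \<Rightarrow> bool" where
  "alg1_seq lam g l u L mu w x \<longleftrightarrow> x 0 \<in> box_set l u \<and>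
     (\<forall>k. x (Suc k) \<in> box_set l u \<and>
        (\<forall>z \<in> box_set l u. sub_obj lam L mu g (y_it g (box_set l u) w x k) (x (Suc k))
                            \<le> sub_obj lam L mu g (y_it g (box_set l u) w x k) z))"

end

theory Submission
  imports Defs
begin


lemma deriv_line:
  fixes f :: "'a::real_inner \<Rightarrow> real"
  assumes grad: "\<forall>z. (f has_derivative (\<lambda>h. inner (g z) h)) (at z)"
  shows "((\<lambda>t. f (a + t *\<^sub>R d)) has_real_derivative inner (g (a + t *\<^sub>R d)) d) (at t)"
proof -
  have l: "((\<lambda>t. a + t *\<^sub>R d) has_derivative (\<lambda>h. h *\<^sub>R d)) (at t)"
    by (auto intro!: derivative_eq_intros)
  have "((\<lambda>t. f (a + t *\<^sub>R d)) has_derivative (\<lambda>h. inner (g (a + t *\<^sub>R d)) (h *\<^sub>R d))) (at t)"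
    using has_derivative_compose[OF l grad[rule_format]] by (simp add: o_def)
  moreover have "(\<lambda>h. inner (g (a + t *\<^sub>R d)) (h *\<^sub>R d)) = (*) (inner (g (a + t *\<^sub>R d)) d)"
    by (auto simp: inner_scaleR_right)
  ultimately show ?thesis by (simp add: has_field_derivative_def)
qed

lemma grad_ineq:
  fixes f :: "'a::real_inner \<Rightarrow> real"
  assumes cvx: "convex_on UNIV f"
    and grad: "\<forall>z. (f has_derivative (\<lambda>h. inner (g z) h)) (at z)"
  shows "f z \<ge> f p + inner (g p) (z - p)"
proof -
  define \<phi> where "\<phi> t = f (p + t *\<^sub>R (z - p))" for t
  have c: "convex_on UNIV \<phi>"
  proof (rule convex_onI)
    fix t x y :: real assume "t > 0" "t < 1"
    have "p + ((1 - t) *\<^sub>R x + t *\<^sub>R y) *\<^sub>R (z - p) = (1 - t) *\<^sub>R (p + x *\<^sub>R (z - p)) + t *\<^sub>R (p + y *\<^sub>R (z - p))"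
      by (simp add: algebra_simps)
    then show "\<phi> ((1 - t) *\<^sub>R x + t *\<^sub>R y) \<le> (1 - t) * \<phi> x + t * \<phi> y"
      unfolding \<phi>_def using convex_onD[OF cvx, of t] \<open>t>0\<close> \<open>t<1\<close> by simp
  qed simp
  have d: "(\<phi> has_real_derivative inner (g p) (z - p)) (at 0 within UNIV)"
    unfolding \<phi>_def using deriv_line[OF grad, of p "z - p" 0] by simp
  have "\<phi> 1 - \<phi> 0 \<ge> inner (g p) (z - p) * (1 - 0)"
    by (rule convex_on_imp_above_tangent[OF c _ _ _ d]) auto
  then show ?thesis unfolding \<phi>_def by simp
qed

lemma descent:
  fixes f :: "'a::real_inner \<Rightarrow> real"
  assumes grad: "\<forall>z. (f has_derivative (\<lambda>h. inner (g z) h)) (at z)"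
    and X: "convex X"
    and lip: "\<forall>z1 \<in> X. \<forall>z2 \<in> X. norm (g z1 - g z2) \<le> L * norm (z1 - z2)"
    and a: "a \<in> X" and b: "b \<in> X"
  shows "f b \<le> f a + inner (g a) (b - a) + L / 2 * (norm (b - a))\<^sup>2"
proof -
  define d where "d = b - a"
  define \<phi> where "\<phi> t = f (a + t *\<^sub>R d) - t * inner (g a) d - L / 2 * t^2 * (norm d)\<^sup>2" for t
  have "\<phi> 1 \<le> \<phi> 0"
  proof (rule DERIV_nonpos_imp_nonincreasing[of 0 1 \<phi>])
    fix t :: real assume t: "0 \<le> t" "t \<le> 1"
    have D: "(\<phi> has_real_derivative inner (g (a + t *\<^sub>R d)) d - inner (g a) d - L * t * (norm d)\<^sup>2) (at t)"
      unfolding \<phi>_def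
      by (rule derivative_eq_intros deriv_line[OF grad] | simp)+
    have mem: "a + t *\<^sub>R d \<in> X"
    proof -
      have "a + t *\<^sub>R d = (1 - t) *\<^sub>R a + t *\<^sub>R b" by (simp add: d_def algebra_simps)
      then show ?thesis using convexD[OF X a b, of "1-t" t] t by simp
    qed
    have "inner (g (a + t *\<^sub>R d)) d - inner (g a) d = inner (g (a + t *\<^sub>R d) - g a) d"
      by (simp add: inner_diff_left)
    also have "\<dots> \<le> norm (g (a + t *\<^sub>R d) - g a) * norm d" by (rule norm_cauchy_schwarz)
    also have "\<dots> \<le> L * norm (a + t *\<^sub>R d - a) * norm d"
    proof (rule mult_right_mono)
      show "norm (g (a + t *\<^sub>R d) - g a) \<le> L * norm (a + t *\<^sub>R d - a)"
        using lip mem a by blast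
    qed simp
    also have "\<dots> = L * t * (norm d)\<^sup>2" using t by (simp add: power2_eq_square)
    finally show "\<exists>y. (\<phi> has_real_derivative y) (at t) \<and> y \<le> 0" using D by auto
  qed simp
  then show ?thesis unfolding \<phi>_def d_def by simp
qed



lemma norm_add_sq:
  fixes a d :: "'a::real_inner"
  shows "(norm (a + t *\<^sub>R d))\<^sup>2 = (norm a)\<^sup>2 + 2 * t * inner a d + t\<^sup>2 * (norm d)\<^sup>2"
  by (simp only: power2_norm_eq_inner) (simp add: inner_add_left inner_add_right inner_commute algebra_simps power2_eq_square)

lemma Qexp:
  fixes x y d gy :: "'a::real_inner"
  assumes L: "L \<noteq> 0"
  shows "L/2 * (norm (x + t *\<^sub>R d - y + (1/L) *\<^sub>R gy))\<^sup>2 + mu/2 * (norm (x + t *\<^sub>R d - y))\<^sup>2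
       = L/2 * (norm (x - y + (1/L) *\<^sub>R gy))\<^sup>2 + mu/2 * (norm (x - y))\<^sup>2
         + t * inner ((L+mu) *\<^sub>R (x - y) + gy) d + t\<^sup>2 * ((L+mu)/2) * (norm d)\<^sup>2"
proof -
  have e1: "x + t *\<^sub>R d - y + (1/L) *\<^sub>R gy = (x - y + (1/L) *\<^sub>R gy) + t *\<^sub>R d" by (simp add: algebra_simps)
  have e2: "x + t *\<^sub>R d - y = (x - y) + t *\<^sub>R d" by (simp add: algebra_simps)
  have e3: "L * inner (x - y + (1/L) *\<^sub>R gy) d = L * inner (x - y) d + inner gy d"
    using L by (simp add: inner_add_left algebra_simps)
  show ?thesis
    unfolding e1 e2 norm_add_sq
    using e3 L by (simp add: inner_add_left inner_commute algebra_simps)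
qed



definition Qf :: "real \<Rightarrow> real \<Rightarrow> 'a::real_normed_vector \<Rightarrow> 'a \<Rightarrow> 'a \<Rightarrow> real" where
  "Qf L mu gy y z = L/2 * (norm (z - y + (1/L) *\<^sub>R gy))\<^sup>2 + mu/2 * (norm (z - y))\<^sup>2"

lemma sub_obj_Qf: "sub_obj lam L mu g y z = lam * real (l0norm z) + Qf L mu (g y) y z"
  by (simp add: sub_obj_def Qf_def)

lemma Qf_exp:
  fixes x y d gy :: "'a::real_inner"
  assumes L: "L \<noteq> 0"
  shows "Qf L mu gy y (x + t *\<^sub>R d) = Qf L mu gy y x
         + t * inner ((L+mu) *\<^sub>R (x - y) + gy) d + t\<^sup>2 * ((L+mu)/2) * (norm d)\<^sup>2"
  unfolding Qf_def using Qexp[OF L] by simp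

lemma Qf_exp2:
  fixes x y z gy :: "'a::real_inner"
  assumes L: "L \<noteq> 0"
  shows "Qf L mu gy y z = Qf L mu gy y x
         + inner ((L+mu) *\<^sub>R (x - y) + gy) (z - x) + ((L+mu)/2) * (norm (z - x))\<^sup>2"
  using Qf_exp[OF L, of mu gy y x 1 "z - x"] by simp

lemma box_convex: "convex (box_set l (u::real^'n))"
proof (unfold convex_def, intro ballI allI impI)
  fix a b :: "real^'n" and s t :: real
  assume "a \<in> box_set l u" "b \<in> box_set l u" and st: "0 \<le> s" "0 \<le> t" "s + t = 1"
  then have a: "\<forall>i. l $ i \<le> a $ i \<and> a $ i \<le> u $ i" and b: "\<forall>i. l $ i \<le> b $ i \<and> b $ i \<le> u $ i"
    by (auto simp: box_set_def)
  show "s *\<^sub>R a + t *\<^sub>R b \<in> box_set l u" unfolding box_set_def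
  proof (intro CollectI allI)
    fix i
    have "s * l$i \<le> s * a$i" "t * l$i \<le> t * b$i" "s * a$i \<le> s * u$i" "t * b$i \<le> t * u$i"
      using a b st by (auto intro: mult_left_mono)
    moreover have "l$i = s * l$i + t * l$i" "u$i = s * u$i + t * u$i" using st by (metis distrib_right mult_1)+
    ultimately show "l $ i \<le> (s *\<^sub>R a + t *\<^sub>R b) $ i \<and> (s *\<^sub>R a + t *\<^sub>R b) $ i \<le> u $ i" by simp
  qed
qed

lemma box_closed: "closed (box_set l u)"
  unfolding box_set_def
  by (intro closed_Collect_all closed_Collect_conj closed_Collect_le continuous_intros)

lemma box_bound: "z \<in> box_set l u \<Longrightarrow> norm z \<le> (\<Sum>i\<in>UNIV. \<bar>l$i\<bar> + \<bar>u$i\<bar>)"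
proof -
  assume z: "z \<in> box_set l u"
  have "norm z \<le> (\<Sum>i\<in>UNIV. \<bar>z$i\<bar>)" by (rule norm_le_l1_cart)
  also have "\<dots> \<le> (\<Sum>i\<in>UNIV. \<bar>l$i\<bar> + \<bar>u$i\<bar>)"
    by (rule sum_mono) (use z in \<open>auto simp: box_set_def abs_le_iff\<close>; smt (verit, best))+
  finally show ?thesis .
qed

lemma box_bounded: "bounded (box_set l u)"
  using box_bound unfolding bounded_iff by blast

lemma box_compact: "compact (box_set l u)"
  using box_bounded box_closed compact_eq_bounded_closed by blast

lemma l0_mono: "(\<And>i. z $ i \<noteq> 0 \<Longrightarrow> v $ i \<noteq> 0) \<Longrightarrow> l0norm z \<le> l0norm v"
  unfolding l0norm_def by (rule card_mono) auto



locale A1 =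
  fixes lam L mu om :: real and l u :: "real^'n" and f :: "real^'n \<Rightarrow> real"
    and g :: "real^'n \<Rightarrow> real^'n" and w :: "nat \<Rightarrow> real" and x :: "nat \<Rightarrow> real^'n"
  assumes lam: "lam > 0"
    and lu: "\<forall>i. l $ i \<le> u $ i"
    and cvx: "convex_on UNIV f"
    and grad: "\<forall>z. (f has_derivative (\<lambda>h. inner (g z) h)) (at z)"
    and bdd: "\<exists>c. \<forall>z \<in> box_set l u. c \<le> f z"
    and L: "L > 0"
    and lip: "\<forall>z1 \<in> box_set l u. \<forall>z2 \<in> box_set l u. norm (g z1 - g z2) \<le> L * norm (z1 - z2)"
    and mu: "mu > 0"
    and om: "om < 1"
    and w: "\<forall>k. 0 \<le> w k \<and> w k \<le> om"
    and alg: "alg1_seq lam g l u L mu w x"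
begin

abbreviation "X \<equiv> box_set l u"
definition yy where "yy k = y_it g X w x k"
definition F where "F z = lam * real (l0norm z) + f z"

lemma x_in: "x k \<in> X"
  using alg unfolding alg1_seq_def by (cases k) auto

lemma minx: "z \<in> X \<Longrightarrow> lam * real (l0norm (x (Suc k))) + Qf L mu (g (yy k)) (yy k) (x (Suc k))
    \<le> lam * real (l0norm z) + Qf L mu (g (yy k)) (yy k) z"
  using alg unfolding alg1_seq_def yy_def sub_obj_Qf by blast

lemma y_cases: "yy k = x k \<or> (yy k = extrap w x k \<and> inner (yy k - x k) (g (yy k)) \<le> 0 \<and> extrap w x k \<in> X)"
  unfolding yy_def y_it_def Let_def by auto

lemma y_in: "yy k \<in> X"
  using y_cases[of k] x_in[of k] by auto

lemma y_supp: "yy k $ i \<noteq> 0 \<Longrightarrow> x k $ i \<noteq> 0"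
  using y_cases[of k] by (auto simp: extrap_def)

lemma y_l0: "l0norm (yy k) \<le> l0norm (x k)"
  by (rule l0_mono) (rule y_supp)

lemma f_y: "f (yy k) \<le> f (x k)"
proof (cases "yy k = x k")
  case True then show ?thesis by simp
next
  case False
  then have "inner (yy k - x k) (g (yy k)) \<le> 0" using y_cases[of k] by auto
  moreover have "f (x k) \<ge> f (yy k) + inner (g (yy k)) (x k - yy k)"
    by (rule grad_ineq[OF cvx grad])
  moreover have "inner (g (yy k)) (x k - yy k) = - inner (yy k - x k) (g (yy k))"
    by (simp add: inner_commute inner_diff_right inner_diff_left)
  ultimately show ?thesis by linarith
qed

lemma descentX: "a \<in> X \<Longrightarrow> b \<in> X \<Longrightarrow> f b \<le> f a + inner (g a) (b - a) + L / 2 * (norm (b - a))\<^sup>2"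
  by (rule descent[OF grad box_convex lip])

lemma decr: "F (x (Suc k)) + mu/2 * (norm (x (Suc k) - yy k))\<^sup>2 \<le> F (x k)"
proof -
  let ?y = "yy k" and ?x = "x (Suc k)"
  have m: "lam * real (l0norm ?x) + Qf L mu (g ?y) ?y ?x \<le> lam * real (l0norm ?y) + Qf L mu (g ?y) ?y ?y"
    using minx[OF y_in] .
  have e: "Qf L mu (g ?y) ?y ?x = Qf L mu (g ?y) ?y ?y + inner (g ?y) (?x - ?y) + ((L+mu)/2) * (norm (?x - ?y))\<^sup>2"
    using Qf_exp2[of L mu "g ?y" ?y ?x ?y] L by simp
  have d: "f ?x \<le> f ?y + inner (g ?y) (?x - ?y) + L / 2 * (norm (?x - ?y))\<^sup>2"
    by (rule descentX[OF y_in x_in])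
  have "lam * real (l0norm ?y) \<le> lam * real (l0norm (x k))"
    using y_l0[of k] lam by simp
  moreover have "((L+mu)/2) * (norm (?x - ?y))\<^sup>2 = L/2 * (norm (?x - ?y))\<^sup>2 + mu/2 * (norm (?x - ?y))\<^sup>2"
    by (simp add: algebra_simps add_divide_distrib)
  ultimately show ?thesis using m e d f_y[of k] unfolding F_def by linarith
qed

lemma F_lb: obtains c0 where "\<And>z. z \<in> X \<Longrightarrow> c0 \<le> F z"
proof -
  obtain c where c: "\<forall>z\<in>X. c \<le> f z" using bdd by blast
  have "c \<le> F z" if "z \<in> X" for z
  proof -
    have "0 \<le> lam * real (l0norm z)" using lam by simp
    then show ?thesis using c that unfolding F_def by fastforce
  qed
  then show ?thesis using that by blast
qed

lemma F_step: "F (x (Suc k)) \<le> F (x k)"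
proof -
  have "0 \<le> mu/2 * (norm (x (Suc k) - yy k))\<^sup>2" using mu by simp
  then show ?thesis using decr[of k] by linarith
qed

lemma F_mono: "m \<le> n \<Longrightarrow> F (x n) \<le> F (x m)"
proof (induction n rule: dec_induct)
  case (step n) then show ?case using F_step[of n] by linarith
qed simp

lemma E_summable: "summable (\<lambda>k. (norm (x (Suc k) - yy k))\<^sup>2)"
proof -
  obtain c0 where c0: "\<And>z. z \<in> X \<Longrightarrow> c0 \<le> F z" using F_lb by blast
  have tel: "(\<Sum>k<n. mu/2 * (norm (x (Suc k) - yy k))\<^sup>2) \<le> F (x 0) - F (x n)" for n
  proof (induction n)
    case (Suc n) then show ?case using decr[of n] by simp
  qed simp
  show ?thesis
  proof (rule summableI_nonneg_bounded)
    fix n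
    have "(\<Sum>k<n. (norm (x (Suc k) - yy k))\<^sup>2) = (2/mu) * (\<Sum>k<n. mu/2 * (norm (x (Suc k) - yy k))\<^sup>2)"
      using mu by (simp add: sum_distrib_left)
    also have "\<dots> \<le> (2/mu) * (F (x 0) - c0)"
      using tel[of n] c0[OF x_in, of n] mu by (intro mult_left_mono) auto
    finally show "(\<Sum>k<n. (norm (x (Suc k) - yy k))\<^sup>2) \<le> (2/mu) * (F (x 0) - c0)" .
  qed simp
qed

lemma E_lim: "(\<lambda>k. x (Suc k) - yy k) \<longlonglongrightarrow> 0"
proof -
  have "(\<lambda>k. (norm (x (Suc k) - yy k))\<^sup>2) \<longlonglongrightarrow> 0" using summable_LIMSEQ_zero[OF E_summable] .
  then have "(\<lambda>k. sqrt ((norm (x (Suc k) - yy k))\<^sup>2)) \<longlonglongrightarrow> sqrt 0" by (intro tendsto_intros)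
  then have "(\<lambda>k. norm (x (Suc k) - yy k)) \<longlonglongrightarrow> 0" by simp
  then show ?thesis using tendsto_norm_zero_iff by blast
qed

end


definition supp :: "real^'n \<Rightarrow> 'n set" where "supp v = {i. v $ i \<noteq> 0}"

lemma l0_supp: "l0norm v = card (supp v)" by (simp add: l0norm_def supp_def)

context A1 begin

definition Bd where "Bd = (\<Sum>i\<in>UNIV. \<bar>l$i\<bar> + \<bar>u$i\<bar>)"
definition Gb where "Gb = norm (g l) + 2 * L * Bd"
definition \<delta> where "\<delta> = lam / (3 * (L + mu) * Bd + Gb + 1)"

lemma l_in: "l \<in> X" using lu by (auto simp: box_set_def)

lemma norm_bd: "z \<in> X \<Longrightarrow> norm z \<le> Bd"
  unfolding Bd_def by (rule box_bound)

lemma Bd_nn: "0 \<le> Bd" using norm_bd[OF l_in] norm_ge_zero order_trans by blast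

lemma comp_bd: "z \<in> X \<Longrightarrow> \<bar>z$i\<bar> \<le> Bd"
  using norm_bd component_le_norm_cart order_trans by blast

lemma g_bd: assumes "z \<in> X" shows "norm (g z) \<le> Gb"
proof -
  have 1: "norm (g z) - norm (g l) \<le> norm (g z - g l)" by (rule norm_triangle_ineq2)
  have 2: "norm (g z - g l) \<le> L * norm (z - l)" using lip assms l_in by blast
  have 3: "norm (z - l) \<le> 2 * Bd" using norm_bd[OF assms] norm_bd[OF l_in] norm_triangle_ineq4[of z l] by linarith
  have 4: "L * norm (z - l) \<le> L * (2 * Bd)" using 3 L by (intro mult_left_mono) auto
  show ?thesis unfolding Gb_def using 1 2 4 by linarith
qed

lemma Gb_nn: "0 \<le> Gb" using g_bd[OF l_in] norm_ge_zero order_trans by blast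

lemma delta_pos: "\<delta> > 0"
proof -
  have "0 \<le> 3 * (L + mu) * Bd" using L mu Bd_nn by simp
  then have "0 < 3 * (L + mu) * Bd + Gb + 1" using Gb_nn by linarith
  then show ?thesis unfolding \<delta>_def using lam by simp
qed

lemma comp_lb:
  assumes li: "l$i \<le> 0" and ui: "0 \<le> u$i" and nz: "x (Suc k) $ i \<noteq> 0"
  shows "\<delta> \<le> \<bar>x (Suc k) $ i\<bar>"
proof -
  let ?y = "yy k" and ?x = "x (Suc k)" and ?c = "L + mu"
  define a where "a = ?x $ i"
  define z where "z = ?x - a *\<^sub>R axis i 1"
  have zc: "z $ j = (if j = i then 0 else ?x $ j)" for j
    by (simp add: z_def a_def axis_def)
  have zin: "z \<in> X" using x_in[of "Suc k"] li ui by (auto simp: box_set_def zc)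
  have "supp ?x = insert i (supp z)" "i \<notin> supp z" using nz by (auto simp: supp_def zc split: if_splits)
  then have l0: "real (l0norm ?x) = real (l0norm z) + 1" by (simp add: l0_supp)
  have m: "lam * real (l0norm ?x) + Qf L mu (g ?y) ?y ?x \<le> lam * real (l0norm z) + Qf L mu (g ?y) ?y z"
    using minx[OF zin] .
  have e: "Qf L mu (g ?y) ?y z = Qf L mu (g ?y) ?y ?x + inner (?c *\<^sub>R (?x - ?y) + g ?y) (z - ?x) + (?c/2) * (norm (z - ?x))\<^sup>2"
    using Qf_exp2[of L mu "g ?y" ?y z ?x] L by simp
  have zx: "z - ?x = (-a) *\<^sub>R axis i 1" by (simp add: z_def)
  have i1: "inner (?c *\<^sub>R (?x - ?y) + g ?y) (z - ?x) = - a * (?c * (a - ?y $ i) + g ?y $ i)"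
    unfolding zx by (simp add: inner_axis a_def)
  have n1: "(norm (z - ?x))\<^sup>2 = a\<^sup>2" unfolding zx by simp
  have l0': "lam * real (l0norm ?x) = lam * real (l0norm z) + lam" using l0 by (simp add: distrib_left)
  have lamle: "lam \<le> - a * (?c * (a - ?y $ i) + g ?y $ i) + (?c/2) * a\<^sup>2"
  proof -
    have e': "Qf L mu (g ?y) ?y z = Qf L mu (g ?y) ?y ?x + (- a * (?c * (a - ?y $ i) + g ?y $ i)) + (?c/2) * a\<^sup>2"
      using e unfolding i1 n1 .
    show ?thesis using m e' l0' by linarith
  qed
  have ba: "\<bar>a\<bar> \<le> Bd" unfolding a_def by (rule comp_bd[OF x_in])
  have byb: "\<bar>?y $ i\<bar> \<le> Bd" by (rule comp_bd[OF y_in])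
  have bg: "\<bar>g ?y $ i\<bar> \<le> Gb" using g_bd[OF y_in] component_le_norm_cart order_trans by blast
  have "- a * (?c * (a - ?y $ i) + g ?y $ i) + (?c/2) * a\<^sup>2 \<le> \<bar>a\<bar> * (?c * (\<bar>a\<bar> + \<bar>?y $ i\<bar>) + \<bar>g ?y $ i\<bar> + ?c * \<bar>a\<bar>)"
  proof -
    have c0: "0 \<le> ?c" using L mu by simp
    have "- a * (?c * (a - ?y $ i) + g ?y $ i) \<le> \<bar>a\<bar> * \<bar>?c * (a - ?y $ i) + g ?y $ i\<bar>"
      using abs_ge_minus_self[of "a * (?c * (a - ?y $ i) + g ?y $ i)"] by (simp add: abs_mult)
    also have "\<bar>?c * (a - ?y $ i) + g ?y $ i\<bar> \<le> ?c * (\<bar>a\<bar> + \<bar>?y $ i\<bar>) + \<bar>g ?y $ i\<bar>"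
    proof -
      have "\<bar>?c * (a - ?y $ i)\<bar> = ?c * \<bar>a - ?y $ i\<bar>" using c0 by (simp add: abs_mult)
      also have "\<dots> \<le> ?c * (\<bar>a\<bar> + \<bar>?y $ i\<bar>)" using c0 abs_triangle_ineq4 by (intro mult_left_mono) auto
      finally show ?thesis using abs_triangle_ineq[of "?c * (a - ?y $ i)" "g ?y $ i"] by linarith
    qed
    finally have 1: "- a * (?c * (a - ?y $ i) + g ?y $ i) \<le> \<bar>a\<bar> * (?c * (\<bar>a\<bar> + \<bar>?y $ i\<bar>) + \<bar>g ?y $ i\<bar>)"
      by (simp add: mult_left_mono)
    have sq: "a\<^sup>2 = \<bar>a\<bar> * \<bar>a\<bar>" by (simp add: power2_eq_square)
    have "(?c/2) * (\<bar>a\<bar> * \<bar>a\<bar>) \<le> ?c * (\<bar>a\<bar> * \<bar>a\<bar>)" using c0 by (intro mult_right_mono) auto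
    then have 2: "(?c/2) * a\<^sup>2 \<le> \<bar>a\<bar> * (?c * \<bar>a\<bar>)" unfolding sq by (simp add: mult_ac)
    have 3: "\<bar>a\<bar> * (?c * (\<bar>a\<bar> + \<bar>?y $ i\<bar>) + \<bar>g ?y $ i\<bar> + ?c * \<bar>a\<bar>) = \<bar>a\<bar> * (?c * (\<bar>a\<bar> + \<bar>?y $ i\<bar>) + \<bar>g ?y $ i\<bar>) + \<bar>a\<bar> * (?c * \<bar>a\<bar>)"
      by (simp add: distrib_left)
    show ?thesis using 1 2 3 by linarith
  qed
  also have "\<dots> \<le> \<bar>a\<bar> * (3 * ?c * Bd + Gb + 1)"
  proof (rule mult_left_mono)
    have c0: "0 \<le> ?c" using L mu by simp
    have "?c * (\<bar>a\<bar> + \<bar>?y $ i\<bar>) \<le> ?c * (2 * Bd)" using ba byb c0 by (intro mult_left_mono) auto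
    moreover have "?c * \<bar>a\<bar> \<le> ?c * Bd" using ba c0 by (intro mult_left_mono) auto
    ultimately show "?c * (\<bar>a\<bar> + \<bar>?y $ i\<bar>) + \<bar>g ?y $ i\<bar> + ?c * \<bar>a\<bar> \<le> 3 * ?c * Bd + Gb + 1"
      using bg by (simp add: algebra_simps)
  qed simp
  finally have "lam \<le> \<bar>a\<bar> * (3 * ?c * Bd + Gb + 1)" using lamle by linarith
  moreover have "0 < 3 * ?c * Bd + Gb + 1"
  proof -
    have "0 \<le> 3 * ?c * Bd" using L mu Bd_nn by simp
    then show ?thesis using Gb_nn by linarith
  qed
  ultimately show ?thesis unfolding \<delta>_def a_def by (simp add: divide_le_eq)
qed

end


context A1 begin

lemma supp_shrink: obtains K0 where "\<And>k. k \<ge> K0 \<Longrightarrow> supp (x (Suc k)) \<subseteq> supp (x k)"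
proof -
  obtain K0 where K0: "\<And>k. k \<ge> K0 \<Longrightarrow> norm ((x (Suc k) - yy k) - 0) < \<delta>"
    using LIMSEQ_D[OF E_lim delta_pos] by blast
  have "supp (x (Suc k)) \<subseteq> supp (x k)" if k: "k \<ge> K0" for k
  proof
    fix i assume "i \<in> supp (x (Suc k))"
    then have nz: "x (Suc k) $ i \<noteq> 0" by (simp add: supp_def)
    show "i \<in> supp (x k)"
    proof (rule ccontr)
      assume "i \<notin> supp (x k)"
      then have z: "x k $ i = 0" by (simp add: supp_def)
      then have "yy k $ i = 0" using y_supp by blast
      then have "\<bar>x (Suc k) $ i\<bar> = \<bar>(x (Suc k) - yy k) $ i\<bar>" by simp
      also have "\<dots> \<le> norm (x (Suc k) - yy k)" by (rule component_le_norm_cart)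
      also have "\<dots> < \<delta>" using K0[OF k] by simp
      finally have lt: "\<bar>x (Suc k) $ i\<bar> < \<delta>" .
      have "l $ i \<le> 0" "0 \<le> u $ i" using x_in[of k] z unfolding box_set_def by (metis (mono_tags, lifting) mem_Collect_eq)+
      from comp_lb[OF this nz] lt show False by linarith
    qed
  qed
  then show ?thesis using that by blast
qed

lemma stable: obtains K where "\<And>m. m \<ge> K \<Longrightarrow> supp (x m) = supp (x K)"
proof -
  obtain K0 where K0: "\<And>k. k \<ge> K0 \<Longrightarrow> supp (x (Suc k)) \<subseteq> supp (x k)" using supp_shrink by blast
  have mono: "supp (x n) \<subseteq> supp (x m)" if "K0 \<le> m" "m \<le> n" for m n
    using that(2,1)
  proof (induction n rule: dec_induct)
    case (step n) then show ?case using K0[of n] by auto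
  qed simp
  define v where "v = (LEAST v. \<exists>m\<ge>K0. card (supp (x m)) = v)"
  have "\<exists>m\<ge>K0. card (supp (x m)) = v" unfolding v_def by (rule LeastI_ex) blast
  then obtain K where K: "K \<ge> K0" "card (supp (x K)) = v" by blast
  have "supp (x m) = supp (x K)" if m: "m \<ge> K" for m
  proof (rule card_subset_eq)
    show "supp (x m) \<subseteq> supp (x K)" using mono K m by auto
    have "v \<le> card (supp (x m))" unfolding v_def by (rule Least_le) (use K m in \<open>intro exI[of _ m]; auto\<close>)
    moreover have "card (supp (x m)) \<le> card (supp (x K))" using mono K m by (intro card_mono) auto
    ultimately show "card (supp (x m)) = card (supp (x K))" using K by simp
  qed simp
  then show ?thesis using that by blast
qed

end


lemma small_t:
  fixes a b :: real
  assumes b: "0 \<le> b" and h: "\<And>t. 0 < t \<Longrightarrow> t \<le> 1 \<Longrightarrow> 0 \<le> a + t * b"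
  shows "0 \<le> a"
proof (rule ccontr)
  assume "\<not> 0 \<le> a" then have a: "a < 0" by simp
  define t where "t = min 1 (- a / (2 * (b + 1)))"
  have "0 < - a / (2 * (b + 1))" using a b by (intro divide_pos_pos) auto
  then have t0: "0 < t" unfolding t_def by simp
  have t1: "t \<le> 1" unfolding t_def by simp
  have "t \<le> - a / (2 * (b + 1))" unfolding t_def by simp
  moreover have "0 < 2 * (b + 1)" using b by simp
  ultimately have "t * (2 * (b + 1)) \<le> - a" using pos_le_divide_eq[of "2 * (b + 1)" t "- a"] by simp
  moreover have "t * b \<le> t * (b + 1)" using t0 by simp
  moreover have "t * (2 * (b + 1)) = 2 * (t * (b + 1))" by simp
  ultimately have "a + t * b < 0" using a by linarith
  with h[OF t0 t1] show False by linarith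
qed

locale A2 = A1 +
  fixes K :: nat
  assumes K: "\<And>m. m \<ge> K \<Longrightarrow> supp (x m) = supp (x K)"
begin

abbreviation "S \<equiv> supp (x K)"
definition C where "C = {z \<in> X. supp z \<subseteq> S}"

lemma x_C: "m \<ge> K \<Longrightarrow> x m \<in> C"
proof -
  assume "m \<ge> K" from K[OF this] show ?thesis using x_in[of m] unfolding C_def by simp
qed

lemma l0_C: "z \<in> C \<Longrightarrow> m \<ge> K \<Longrightarrow> l0norm z \<le> l0norm (x m)"
proof -
  assume z: "z \<in> C" and m: "m \<ge> K"
  have "supp z \<subseteq> supp (x m)" using z K[OF m] unfolding C_def by simp
  then show ?thesis unfolding l0_supp by (intro card_mono) auto
qed

lemma C_conv: assumes "a \<in> C" "b \<in> C" "0 \<le> t" "t \<le> 1" shows "a + t *\<^sub>R (b - a) \<in> C"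
proof -
  have e: "a + t *\<^sub>R (b - a) = (1 - t) *\<^sub>R a + t *\<^sub>R b" by (simp add: algebra_simps)
  have "a + t *\<^sub>R (b - a) \<in> X" unfolding e using assms convexD[OF box_convex[of l u], of a b "1-t" t] by (auto simp: C_def)
  moreover have "supp (a + t *\<^sub>R (b - a)) \<subseteq> S"
  proof
    fix i assume i: "i \<in> supp (a + t *\<^sub>R (b - a))"
    show "i \<in> S"
    proof (rule ccontr)
      assume "i \<notin> S"
      then have "a $ i = 0" "b $ i = 0" using assms unfolding C_def supp_def by auto
      then show False using i by (simp add: supp_def)
    qed
  qed
  ultimately show ?thesis by (simp add: C_def)
qed

lemma minQ: assumes k: "k \<ge> K" and z: "z \<in> C"
  shows "Qf L mu (g (yy k)) (yy k) (x (Suc k)) \<le> Qf L mu (g (yy k)) (yy k) z"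
proof -
  have "z \<in> X" using z by (simp add: C_def)
  from minx[OF this, of k] have "lam * real (l0norm (x (Suc k))) + Qf L mu (g (yy k)) (yy k) (x (Suc k))
    \<le> lam * real (l0norm z) + Qf L mu (g (yy k)) (yy k) z" .
  moreover have "lam * real (l0norm z) \<le> lam * real (l0norm (x (Suc k)))"
    using l0_C[OF z, of "Suc k"] k lam by simp
  ultimately show ?thesis by linarith
qed

lemma FOC: assumes k: "k \<ge> K" and z: "z \<in> C"
  shows "0 \<le> inner ((L+mu) *\<^sub>R (x (Suc k) - yy k) + g (yy k)) (z - x (Suc k))"
proof (rule small_t)
  show "0 \<le> ((L+mu)/2) * (norm (z - x (Suc k)))\<^sup>2" using L mu by simp
  fix t :: real assume t: "0 < t" "t \<le> 1"
  let ?Q = "Qf L mu (g (yy k)) (yy k)" and ?ip = "inner ((L+mu) *\<^sub>R (x (Suc k) - yy k) + g (yy k)) (z - x (Suc k))"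
    and ?N = "((L+mu)/2) * (norm (z - x (Suc k)))\<^sup>2"
  have "x (Suc k) + t *\<^sub>R (z - x (Suc k)) \<in> C" using C_conv[OF x_C z] k t by simp
  from minQ[OF k this] have "?Q (x (Suc k)) \<le> ?Q (x (Suc k) + t *\<^sub>R (z - x (Suc k)))" .
  also have "\<dots> = ?Q (x (Suc k)) + t * ?ip + t\<^sup>2 * ((L+mu)/2) * (norm (z - x (Suc k)))\<^sup>2"
    by (rule Qf_exp) (use L in simp)
  finally have "0 \<le> t * ?ip + t * (t * ?N)" by (simp add: power2_eq_square mult_ac)
  then have "0 \<le> t * (?ip + t * ?N)" by (simp add: distrib_left)
  then show "0 \<le> ?ip + t * ?N" using t by (simp add: zero_le_mult_iff)
qed

end


locale A3 = A2 +
  fixes p :: "real^'a" and r :: "nat \<Rightarrow> nat"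
  assumes r: "strict_mono r" and xr': "(x \<circ> r) \<longlonglongrightarrow> p"
begin

lemma xr: "(\<lambda>j. x (r j)) \<longlonglongrightarrow> p" using xr' by (simp add: o_def)

lemma r_ge: "j \<le> r j" using seq_suble[OF r] .

lemma p_in: "p \<in> X" using closed_sequentially[OF box_closed, of "\<lambda>j. x (r j)"] x_in xr by blast

lemma comp_r: "(\<lambda>j. x (r j) $ i) \<longlonglongrightarrow> p $ i" using xr by (intro tendsto_intros)

lemma supp_p: "supp p = S"
proof (intro set_eqI iffI)
  fix i assume "i \<in> S"
  then have nz: "x (r j) $ i \<noteq> 0" if "j \<ge> K" for j
    using K[of "r j"] r_ge[of j] that unfolding supp_def by (metis (mono_tags, lifting) le_trans mem_Collect_eq)
  show "i \<in> supp p"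
  proof (cases "l $ i \<le> 0 \<and> 0 \<le> u $ i")
    case True
    have "\<delta> \<le> \<bar>x (r j) $ i\<bar>" if "j \<ge> Suc K" for j
    proof -
      have rj: "r j = Suc (r j - 1)" using r_ge[of j] that by simp
      have "x (Suc (r j - 1)) $ i \<noteq> 0" using nz[of j] that rj by simp
      from comp_lb[OF _ _ this] True rj show ?thesis by simp
    qed
    then have "\<delta> \<le> \<bar>p $ i\<bar>" using LIMSEQ_le_const[OF tendsto_rabs[OF comp_r]] by blast
    then show ?thesis using delta_pos by (auto simp: supp_def)
  next
    case False
    have "l$i \<le> p$i" "p$i \<le> u$i" using p_in by (auto simp: box_set_def)
    then show ?thesis using False by (auto simp: supp_def)
  qed
next
  fix i assume i: "i \<in> supp p"
  show "i \<in> S"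
  proof (rule ccontr)
    assume "i \<notin> S"
    then have z: "x (r j) $ i = 0" if "j \<ge> K" for j
      using K[of "r j"] r_ge[of j] that unfolding supp_def by (metis (mono_tags, lifting) le_trans mem_Collect_eq)
    have "p $ i \<le> 0" using LIMSEQ_le_const2[OF comp_r] z by (metis order_refl)
    moreover have "0 \<le> p $ i" using LIMSEQ_le_const[OF comp_r] z by (metis order_refl)
    ultimately show False using i by (simp add: supp_def)
  qed
qed

lemma p_C: "p \<in> C" using p_in supp_p by (simp add: C_def)

lemma l0p: "l0norm p = card S" using supp_p by (simp add: l0_supp)

lemma E'_lim: "(\<lambda>m. x m - yy (m - 1)) \<longlonglongrightarrow> 0"
  by (rule LIMSEQ_imp_Suc) (use E_lim in simp)

lemma yr: "(\<lambda>j. yy (r j - 1)) \<longlonglongrightarrow> p"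
proof -
  have "(\<lambda>j. x (r j) - yy (r j - 1)) \<longlonglongrightarrow> 0"
    using LIMSEQ_subseq_LIMSEQ[OF E'_lim r] by (simp add: o_def)
  from tendsto_diff[OF xr this] show ?thesis by simp
qed

lemma g_seq: assumes Y: "Y \<longlonglongrightarrow> p" and Yin: "\<And>j. Y j \<in> X" shows "(\<lambda>j. g (Y j)) \<longlonglongrightarrow> g p"
proof (rule LIM_zero_cancel)
  have "(\<lambda>j. L * norm (Y j - p)) \<longlonglongrightarrow> L * 0"
    using Y by (intro tendsto_intros) (simp add: LIM_zero tendsto_norm_zero)
  moreover have "\<forall>\<^sub>F j in sequentially. norm (g (Y j) - g p) \<le> L * norm (Y j - p)"
    using lip Yin p_in by auto
  ultimately show "(\<lambda>j. g (Y j) - g p) \<longlonglongrightarrow> 0"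
    using Lim_null_comparison by fastforce
qed

lemma FOCp: assumes z: "z \<in> C" shows "0 \<le> inner (g p) (z - p)"
proof -
  have lim: "(\<lambda>j. inner ((L+mu) *\<^sub>R (x (r j) - yy (r j - 1)) + g (yy (r j - 1))) (z - x (r j)))
       \<longlonglongrightarrow> inner ((L+mu) *\<^sub>R (p - p) + g p) (z - p)"
    by (intro tendsto_intros xr yr g_seq y_in)
  have "0 \<le> inner ((L+mu) *\<^sub>R (x (r j) - yy (r j - 1)) + g (yy (r j - 1))) (z - x (r j))" if j: "j \<ge> Suc K" for j
  proof -
    have rj: "r j = Suc (r j - 1)" and k: "r j - 1 \<ge> K" using r_ge[of j] j by auto
    from FOC[OF k z] rj show ?thesis by metis
  qed
  then show ?thesis using LIMSEQ_le_const[OF lim] by auto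
qed

lemma f_C: "z \<in> C \<Longrightarrow> f p \<le> f z"
  using grad_ineq[OF cvx grad, of p z] FOCp[of z] by linarith

lemma f_cont: "isCont f z"
  using grad has_derivative_continuous by blast

lemma fxr: "(\<lambda>j. f (x (r j))) \<longlonglongrightarrow> f p"
  by (rule isCont_tendsto_compose[OF f_cont xr])

lemma F_K: "m \<ge> K \<Longrightarrow> F (x m) = lam * real (card S) + f (x m)"
proof -
  assume "m \<ge> K" from K[OF this] show ?thesis unfolding F_def l0_supp by simp
qed

lemma f_mono: "K \<le> m \<Longrightarrow> m \<le> n \<Longrightarrow> f (x n) \<le> f (x m)"
  using F_mono[of m n] F_K[of m] F_K[of n] by simp

lemma f_le: "m \<ge> K \<Longrightarrow> f p \<le> f (x m)"
proof -
  assume m: "m \<ge> K"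
  have "f (x (r j)) \<le> f (x m)" if "j \<ge> m" for j using f_mono[OF m] r_ge[of j] that by simp
  then show ?thesis using LIMSEQ_le_const2[OF fxr] by blast
qed

lemma f_lim: "(\<lambda>m. f (x m)) \<longlonglongrightarrow> f p"
proof (rule LIMSEQ_I)
  fix e :: real assume e: "0 < e"
  obtain j0 where j0: "\<And>j. j \<ge> j0 \<Longrightarrow> norm (f (x (r j)) - f p) < e" using LIMSEQ_D[OF fxr e] by blast
  define M where "M = r (max j0 K)"
  have MK: "M \<ge> K" unfolding M_def using r_ge[of "max j0 K"] by simp
  have "norm (f (x m) - f p) < e" if m: "m \<ge> M" for m
  proof -
    have "f (x m) \<le> f (x M)" using f_mono[OF MK m] .
    moreover have "f (x M) - f p < e" using j0[of "max j0 K"] unfolding M_def by simp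
    moreover have "f p \<le> f (x m)" using f_le MK m by simp
    ultimately show ?thesis by simp
  qed
  then show "\<exists>no. \<forall>n\<ge>no. norm (f (x n) - f p) < e" by blast
qed

lemma H_eq: "z \<in> X \<Longrightarrow> Hfun lam f l u z = ereal (F z)"
  by (simp add: Hfun_def ind_fun_def F_def)

lemma H_lim: "(\<lambda>m. Hfun lam f l u (x m)) \<longlonglongrightarrow> Hfun lam f l u p"
proof -
  have "(\<lambda>m. lam * real (card S) + f (x m)) \<longlonglongrightarrow> lam * real (card S) + f p"
    by (intro tendsto_intros f_lim)
  moreover have "\<forall>\<^sub>F m in sequentially. lam * real (card S) + f (x m) = F (x m)"
    unfolding eventually_sequentially using F_K by (metis)
  ultimately have "(\<lambda>m. F (x m)) \<longlonglongrightarrow> lam * real (card S) + f p"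
    by (rule Lim_transform_eventually)
  then have "(\<lambda>m. F (x m)) \<longlonglongrightarrow> F p" unfolding F_def l0p .
  then show ?thesis unfolding H_eq[OF x_in] H_eq[OF p_in] by simp
qed

end


context A3 begin

lemma local_min: "local_minimizer (Hfun lam f l u) X p"
proof -
  define U where "U = (\<Inter>i\<in>S. {z. z $ i \<noteq> 0}) \<inter> {z. f p - lam < f z}"
  have o1: "open {z::real^'a. z $ i \<noteq> 0}" for i by (intro open_Collect_neq continuous_intros)
  have cf: "continuous_on UNIV f" using f_cont by (simp add: continuous_at_imp_continuous_on)
  have o2: "open {z. f p - lam < f z}" by (rule open_Collect_less) (use cf in \<open>auto intro: continuous_intros\<close>)
  have "open (\<Inter>i\<in>S. {z::real^'a. z $ i \<noteq> 0})" by (rule open_INT) (use o1 in auto)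
  then have oU: "open U" unfolding U_def using o2 by (rule open_Int)
  have pU: "p \<in> U" unfolding U_def using supp_p lam by (auto simp: supp_def)
  obtain e where e: "e > 0" "ball p e \<subseteq> U" using oU pU open_contains_ball by blast
  have "Hfun lam f l u p \<le> Hfun lam f l u z" if dz: "dist z p < e" for z
  proof (cases "z \<in> X")
    case False
    then show ?thesis by (simp add: Hfun_def ind_fun_def)
  next
    case True
    have zU: "z \<in> U" using e dz by (auto simp: dist_commute)
    then have Sz: "S \<subseteq> supp z" and fz: "f p - lam < f z" unfolding U_def supp_def by auto
    have "F p \<le> F z"
    proof (cases "supp z = S")
      case True
      then have "z \<in> C" using \<open>z \<in> X\<close> by (simp add: C_def)
      then show ?thesis using f_C True unfolding F_def l0_supp supp_p by simp
    next
      case False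
      then have "card S < card (supp z)" using Sz by (intro psubset_card_mono) auto
      then have "real (card S) + 1 \<le> real (card (supp z))" by simp
      then have "lam * real (card S) + lam \<le> lam * real (card (supp z))"
        using lam by (metis distrib_left mult.right_neutral mult_le_cancel_left_pos)
      then show ?thesis using fz unfolding F_def l0_supp supp_p by linarith
    qed
    then show ?thesis using H_eq[OF True] H_eq[OF p_in] by simp
  qed
  then show ?thesis unfolding local_minimizer_def using p_in e(1) by blast
qed

end


lemma REC:
  fixes a b :: "nat \<Rightarrow> real"
  assumes a0: "\<And>n. 0 \<le> a n" and b0: "\<And>n. 0 \<le> b n" and sb: "summable b"
    and om: "0 \<le> \<omega>" "\<omega> < 1" and rec: "\<And>n. a (Suc n) \<le> \<omega> * a n + b n"
  shows "summable a"
proof (rule summableI_nonneg_bounded)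
  fix N
  define B where "B = suminf b"
  have sN: "(\<Sum>n<N. b n) \<le> B" unfolding B_def using sb b0 by (intro sum_le_suminf) auto
  have "(\<Sum>n<N. a (Suc n)) \<le> (\<Sum>n<N. \<omega> * a n + b n)" using rec by (intro sum_mono) auto
  also have "\<dots> = \<omega> * (\<Sum>n<N. a n) + (\<Sum>n<N. b n)" by (simp add: sum.distrib sum_distrib_left)
  finally have 1: "(\<Sum>n<N. a (Suc n)) \<le> \<omega> * (\<Sum>n<N. a n) + B" using sN by linarith
  have 2: "(\<Sum>n<Suc N. a n) = a 0 + (\<Sum>n<N. a (Suc n))" by (rule sum.lessThan_Suc_shift)
  have 3: "(\<Sum>n<N. a n) \<le> (\<Sum>n<Suc N. a n)" using a0 by simp
  have "\<omega> * (\<Sum>n<N. a n) \<le> \<omega> * (\<Sum>n<Suc N. a n)" using 3 om by (intro mult_left_mono) auto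
  moreover have "(1 - \<omega>) * (\<Sum>n<Suc N. a n) = (\<Sum>n<Suc N. a n) - \<omega> * (\<Sum>n<Suc N. a n)"
    by (simp add: algebra_simps)
  ultimately have "(1 - \<omega>) * (\<Sum>n<Suc N. a n) \<le> a 0 + B" using 1 2 by linarith
  then have "(\<Sum>n<Suc N. a n) \<le> (a 0 + B) / (1 - \<omega>)" using om by (simp add: pos_le_divide_eq mult.commute)
  with 3 show "(\<Sum>n<N. a n) \<le> (a 0 + B) / (1 - \<omega>)" by linarith
qed (rule a0)

lemma CONV:
  fixes D t :: "nat \<Rightarrow> real"
  assumes D0: "\<And>n. 0 \<le> D n" and t0: "\<And>n. 0 \<le> t n" and st: "summable t"
    and rec: "\<And>n. D (Suc n) \<le> D n + t n"
  shows "convergent D"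
proof -
  define G where "G n = D n - (\<Sum>j<n. t j)" for n
  have "G (Suc n) \<le> G n" for n using rec[of n] by (simp add: G_def)
  then have "decseq G" unfolding decseq_Suc_iff by blast
  moreover have "\<forall>n. - suminf t \<le> G n"
  proof
    fix n have "(\<Sum>j<n. t j) \<le> suminf t" using st t0 by (intro sum_le_suminf) auto
    then show "- suminf t \<le> G n" unfolding G_def using D0[of n] by linarith
  qed
  ultimately obtain Lg where Lg: "G \<longlonglongrightarrow> Lg" using decseq_convergent by blast
  have "(\<lambda>n. \<Sum>j<n. t j) \<longlonglongrightarrow> suminf t" using summable_LIMSEQ[OF st] .
  from tendsto_add[OF Lg this] have "D \<longlonglongrightarrow> Lg + suminf t" unfolding G_def by simp
  then show ?thesis by (auto simp: convergent_def)
qed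

lemma sq_ineq:
  fixes P Q om :: real
  assumes om: "0 < om" "om < 1"
  shows "(P + Q)\<^sup>2 \<le> P\<^sup>2 / (1 - om) + Q\<^sup>2 / om"
proof -
  have id: "P\<^sup>2 * om + Q\<^sup>2 * (1 - om) - (P + Q)\<^sup>2 * (om * (1 - om)) = (P * om - Q * (1 - om))\<^sup>2"
    by (simp add: power2_eq_square algebra_simps)
  have "(P + Q)\<^sup>2 * (om * (1 - om)) \<le> P\<^sup>2 * om + Q\<^sup>2 * (1 - om)"
    using id zero_le_power2[of "P * om - Q * (1 - om)"] by linarith
  moreover have "P\<^sup>2 / (1 - om) + Q\<^sup>2 / om = (P\<^sup>2 * om + Q\<^sup>2 * (1 - om)) / (om * (1 - om))"
    using om by (simp add: field_simps)
  moreover have "0 < om * (1 - om)" using om by simp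
  ultimately show ?thesis by (simp add: le_divide_eq)
qed



locale A4 = A3 +
  assumes om_pos: "0 < om"
begin

definition "aa k = (norm (x (Suc k) - x k))\<^sup>2"
definition "ee k = (norm (x (Suc k) - yy k))\<^sup>2"
definition "dd k = (norm (x k - p))\<^sup>2"
definition "th k = max 0 (dd k - dd (k - 1))"

lemma yform: assumes k: "k \<ge> Suc K"
  shows "yy k = x k \<or> yy k = x k + w k *\<^sub>R (x k - x (k - 1))"
proof (cases "yy k = x k")
  case False
  then have y: "yy k = extrap w x k" using y_cases[of k] by auto
  have s1: "supp (x k) = S" and s2: "supp (x (k - 1)) = S" using K[of k] K[of "k-1"] k by auto
  have "yy k = x k + w k *\<^sub>R (x k - x (k - 1))"
  proof (subst vec_eq_iff, intro allI)
    fix i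
    show "yy k $ i = (x k + w k *\<^sub>R (x k - x (k - 1))) $ i"
    proof (cases "x k $ i = 0")
      case True
      then have "x (k - 1) $ i = 0" using s1 s2 unfolding supp_def by blast
      then show ?thesis using True y k by (simp add: extrap_def prev_it_def)
    next
      case False
      then show ?thesis using y k by (simp add: extrap_def prev_it_def)
    qed
  qed
  then show ?thesis by simp
qed simp

lemma ystep: assumes k: "k \<ge> Suc K" shows "norm (yy k - x k) \<le> om * norm (x k - x (k - 1))"
proof -
  have "0 \<le> w k" "w k \<le> om" using w by auto
  then have "w k * norm (x k - x (k - 1)) \<le> om * norm (x k - x (k - 1))" by (intro mult_right_mono) auto
  moreover have "0 \<le> om * norm (x k - x (k - 1))" using om_pos by simp
  ultimately show ?thesis using yform[OF k] \<open>0 \<le> w k\<close> by auto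
qed

lemma arec: assumes k: "k \<ge> Suc K" shows "aa k \<le> ee k / (1 - om) + om * aa (k - 1)"
proof -
  have kk: "Suc (k - 1) = k" using k by simp
  have "norm (x (Suc k) - x k) \<le> norm (x (Suc k) - yy k) + norm (yy k - x k)"
    by (metis diff_add_cancel norm_triangle_ineq add_diff_eq)
  also have "\<dots> \<le> norm (x (Suc k) - yy k) + om * norm (x k - x (k - 1))" using ystep[OF k] by simp
  finally have 1: "norm (x (Suc k) - x k) \<le> norm (x (Suc k) - yy k) + om * norm (x k - x (k - 1))" .
  have "aa k \<le> (norm (x (Suc k) - yy k) + om * norm (x k - x (k - 1)))\<^sup>2"
    unfolding aa_def using 1 by (intro power_mono) auto
  also have "\<dots> \<le> (norm (x (Suc k) - yy k))\<^sup>2 / (1 - om) + (om * norm (x k - x (k - 1)))\<^sup>2 / om"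
    by (rule sq_ineq[OF om_pos om])
  also have "(om * norm (x k - x (k - 1)))\<^sup>2 / om = om * aa (k - 1)"
    unfolding aa_def kk using om_pos by (simp add: power2_eq_square)
  finally show ?thesis unfolding ee_def .
qed

lemma fejer: assumes k: "k \<ge> K" shows "dd (Suc k) \<le> (norm (yy k - p))\<^sup>2"
proof -
  let ?x = "x (Suc k)" and ?y = "yy k" and ?c = "L + mu"
  let ?I = "inner (?x - ?y) (p - ?x)" and ?N = "(norm (?x - ?y))\<^sup>2"
  have foc: "0 \<le> inner (?c *\<^sub>R (?x - ?y) + g ?y) (p - ?x)" by (rule FOC[OF k p_C])
  have foc': "inner (?c *\<^sub>R (?x - ?y) + g ?y) (p - ?x) = ?c * ?I + inner (g ?y) (p - ?x)"
    by (simp add: inner_add_left)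
  have cv: "f p \<ge> f ?y + inner (g ?y) (p - ?y)" by (rule grad_ineq[OF cvx grad])
  have ds: "f ?x \<le> f ?y + inner (g ?y) (?x - ?y) + L / 2 * ?N" by (rule descentX[OF y_in x_in])
  have fl: "f p \<le> f ?x" using f_le k by simp
  have ip: "inner (g ?y) (?x - ?y) - inner (g ?y) (p - ?y) = - inner (g ?y) (p - ?x)"
    by (simp add: inner_diff_right)
  have 1: "0 \<le> ?c * ?I + L / 2 * ?N" using foc foc' cv ds fl ip by linarith
  have N0: "0 \<le> ?N" by simp
  have "?c * (2 * ?I + ?N) = 2 * (?c * ?I + L/2 * ?N) + mu * ?N" by (simp add: algebra_simps)
  also have "\<dots> \<ge> 0" using 1 N0 mu by simp
  finally have "0 \<le> ?c * (2 * ?I + ?N)" .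
  then have 2: "0 \<le> 2 * ?I + ?N" using L mu by (simp add: zero_le_mult_iff)
  have "?y - p = (?x - p) - (?x - ?y)" by simp
  then have "(norm (?y - p))\<^sup>2 = (norm ((?x - p) + (-1) *\<^sub>R (?x - ?y)))\<^sup>2" by simp
  also have "\<dots> = dd (Suc k) - 2 * inner (?x - p) (?x - ?y) + ?N"
    unfolding norm_add_sq dd_def by simp
  also have "inner (?x - p) (?x - ?y) = - ?I"
    by (simp add: inner_commute inner_diff_left inner_diff_right)
  finally show ?thesis using 2 by linarith
qed

end


context A4 begin

lemma drec: assumes k: "k \<ge> Suc K" shows "th (Suc k) \<le> om * th k + 2 * aa (k - 1)"
proof -
  have kk: "Suc (k - 1) = k" using k by simp
  have aa0: "0 \<le> aa (k - 1)" by (simp add: aa_def)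
  have th0: "0 \<le> th k" by (simp add: th_def)
  have w0: "0 \<le> w k" "w k \<le> om" using w by auto
  have fj: "dd (Suc k) \<le> (norm (yy k - p))\<^sup>2" using fejer k by simp
  have "(norm (yy k - p))\<^sup>2 \<le> dd k + om * th k + 2 * aa (k - 1)"
  proof (cases "yy k = x k")
    case True then show ?thesis using aa0 th0 om_pos by (simp add: dd_def)
  next
    case False
    then have y: "yy k = x k + w k *\<^sub>R (x k - x (k - 1))" using yform[OF k] by auto
    define A where "A = x k - p"
    define B where "B = x (k - 1) - p"
    have AB: "x k - x (k - 1) = A - B" by (simp add: A_def B_def)
    have "yy k - p = A + w k *\<^sub>R (A - B)" unfolding y AB by (simp add: A_def algebra_simps)
    then have e1: "(norm (yy k - p))\<^sup>2 = (norm A)\<^sup>2 + 2 * w k * inner A (A - B) + (w k)\<^sup>2 * (norm (A - B))\<^sup>2"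
      by (simp add: norm_add_sq)
    have bb: "A + (-1) *\<^sub>R (A - B) = B" by simp
    have "(norm B)\<^sup>2 = (norm A)\<^sup>2 - 2 * inner A (A - B) + (norm (A - B))\<^sup>2"
      using norm_add_sq[of A "-1" "A - B"] unfolding bb by simp
    then have e2: "2 * inner A (A - B) = dd k - dd (k - 1) + aa (k - 1)"
      unfolding dd_def aa_def kk AB[symmetric] A_def[symmetric] B_def[symmetric] by linarith
    have e3: "(norm (A - B))\<^sup>2 = aa (k - 1)" unfolding aa_def kk AB[symmetric] ..
    have "(norm (yy k - p))\<^sup>2 = dd k + w k * (dd k - dd (k - 1)) + (w k + (w k)\<^sup>2) * aa (k - 1)"
    proof -
      have "2 * w k * inner A (A - B) = w k * (2 * inner A (A - B))" by simp
      also have "\<dots> = w k * (dd k - dd (k - 1) + aa (k - 1))" unfolding e2 ..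
      finally have t1: "2 * w k * inner A (A - B) = w k * (dd k - dd (k - 1) + aa (k - 1))" .
      have t2: "(norm A)\<^sup>2 = dd k" by (simp add: dd_def A_def)
      show ?thesis unfolding e1 e3 t1 t2 by (simp add: algebra_simps)
    qed
    also have "w k * (dd k - dd (k - 1)) \<le> om * th k"
    proof -
      have "w k * (dd k - dd (k - 1)) \<le> w k * th k" using w0 by (intro mult_left_mono) (auto simp: th_def)
      also have "\<dots> \<le> om * th k" using w0 th0 by (intro mult_right_mono) auto
      finally show ?thesis .
    qed
    also have "(w k + (w k)\<^sup>2) * aa (k - 1) \<le> 2 * aa (k - 1)"
    proof (rule mult_right_mono)
      have "w k \<le> 1" using w0 om by simp
      then have "(w k)\<^sup>2 \<le> 1" using w0 by (simp add: power_le_one)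
      then show "w k + (w k)\<^sup>2 \<le> 2" using \<open>w k \<le> 1\<close> by simp
    qed (rule aa0)
    finally show ?thesis by simp
  qed
  then have "dd (Suc k) - dd k \<le> om * th k + 2 * aa (k - 1)" using fj by linarith
  moreover have "0 \<le> om * th k + 2 * aa (k - 1)" using th0 aa0 om_pos by simp
  ultimately show ?thesis unfolding th_def by simp
qed

lemma x_conv: "x \<longlonglongrightarrow> p"
proof -
  define a' where "a' n = aa (n + K)" for n
  define b where "b n = ee (n + Suc K) / (1 - om)" for n
  have "summable (\<lambda>n. ee (n + Suc K))"
    using summable_ignore_initial_segment[OF E_summable, of "Suc K"] by (simp add: ee_def)
  then have sb: "summable b" unfolding b_def by (rule summable_divide)
  have sa: "summable a'"
  proof (rule REC[of a' b om])
    show "0 \<le> a' n" for n by (simp add: a'_def aa_def)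
    show "0 \<le> b n" for n using om by (simp add: b_def ee_def)
    show "summable b" by (rule sb)
    show "0 \<le> om" using om_pos by simp
    show "om < 1" by (rule om)
    show "a' (Suc n) \<le> om * a' n + b n" for n
      using arec[of "Suc n + K"] by (simp add: a'_def b_def add.commute)
  qed
  define t' where "t' n = th (n + Suc K)" for n
  have st: "summable t'"
  proof (rule REC[of t' "\<lambda>n. 2 * a' n" om])
    show "0 \<le> t' n" for n by (simp add: t'_def th_def)
    show "0 \<le> 2 * a' n" for n by (simp add: a'_def aa_def)
    show "summable (\<lambda>n. 2 * a' n)" using summable_mult[OF sa] .
    show "0 \<le> om" using om_pos by simp
    show "om < 1" by (rule om)
    show "t' (Suc n) \<le> om * t' n + 2 * a' n" for n
      using drec[of "n + Suc K"] by (simp add: t'_def a'_def)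
  qed
  define D' where "D' n = dd (n + Suc K)" for n
  have "convergent D'"
  proof (rule CONV[of D' "\<lambda>n. t' (Suc n)"])
    show "0 \<le> D' n" for n by (simp add: D'_def dd_def)
    show "0 \<le> t' (Suc n)" for n by (simp add: t'_def th_def)
    show "summable (\<lambda>n. t' (Suc n))" using st by (simp add: summable_Suc_iff)
    show "D' (Suc n) \<le> D' n + t' (Suc n)" for n
      unfolding D'_def t'_def th_def by simp
  qed
  moreover have "D' = (\<lambda>n. dd (n + Suc K))" by (simp add: D'_def fun_eq_iff)
  ultimately have "convergent dd" using convergent_ignore_initial_segment[of dd "Suc K"] by simp
  then obtain ell where ell: "dd \<longlonglongrightarrow> ell" by (auto simp: convergent_def)
  have "(\<lambda>j. x (r j) - p) \<longlonglongrightarrow> 0" using xr by (simp add: LIM_zero)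
  then have "(\<lambda>j. (norm (x (r j) - p))\<^sup>2) \<longlonglongrightarrow> (norm (0::real^'a))\<^sup>2" by (intro tendsto_intros)
  then have "(dd \<circ> r) \<longlonglongrightarrow> 0" by (simp add: dd_def o_def)
  moreover have "(dd \<circ> r) \<longlonglongrightarrow> ell" using LIMSEQ_subseq_LIMSEQ[OF ell r] .
  ultimately have "ell = 0" using LIMSEQ_unique by blast
  then have "(\<lambda>k. sqrt (dd k)) \<longlonglongrightarrow> sqrt 0" using ell by (intro tendsto_intros) simp
  then have "(\<lambda>k. norm (x k - p)) \<longlonglongrightarrow> 0" by (simp add: dd_def)
  then have "(\<lambda>k. x k - p) \<longlonglongrightarrow> 0" using tendsto_norm_zero_iff by blast
  then show ?thesis by (rule LIM_zero_cancel)
qed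

end

theorem theorem2p6:
  fixes lam L mu om :: real and l u :: "real^'n" and f :: "real^'n \<Rightarrow> real"
    and g :: "real^'n \<Rightarrow> real^'n" and w :: "nat \<Rightarrow> real" and x :: "nat \<Rightarrow> real^'n"
  assumes lam: "lam > 0"
    and lu: "\<forall>i. l $ i \<le> u $ i"
    and cvx: "convex_on UNIV f"
    and grad: "\<forall>z. (f has_derivative (\<lambda>h. inner (g z) h)) (at z)"
    and bdd: "\<exists>c. \<forall>z \<in> box_set l u. c \<le> f z"
    and L: "L > 0"
    and lip: "\<forall>z1 \<in> box_set l u. \<forall>z2 \<in> box_set l u. norm (g z1 - g z2) \<le> L * norm (z1 - z2)"
    and mu: "mu > 0"
    and om: "om < 1"
    and w: "\<forall>k. 0 \<le> w k \<and> w k \<le> om"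
    and alg: "alg1_seq lam g l u L mu w x"
  shows "bounded (range x)
    \<and> (\<forall>p. cluster_point x p \<longrightarrow> local_minimizer (Hfun lam f l u) (box_set l u) p)
    \<and> (\<forall>p. cluster_point x p \<longrightarrow> ((\<lambda>k. Hfun lam f l u (x k)) \<longlonglongrightarrow> Hfun lam f l u p))
    \<and> ((\<forall>k. w k = om) \<and> 0 < om \<longrightarrow>
         (\<exists>p. x \<longlonglongrightarrow> p \<and> local_minimizer (Hfun lam f l u) (box_set l u) p))"
proof -
  interpret a1: A1 lam L mu om l u f g w x
    by (rule A1.intro) (rule assms)+
  obtain K where K: "\<And>m. m \<ge> K \<Longrightarrow> supp (x m) = supp (x K)" using a1.stable by blast
  interpret a2: A2 lam L mu om l u f g w x K
    by (rule A2.intro, rule a1.A1_axioms, rule A2_axioms.intro, rule K)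
  have bd: "bounded (range x)"
    using bounded_subset[OF box_bounded[of l u]] a1.x_in by blast
  have cl: "local_minimizer (Hfun lam f l u) (box_set l u) p \<and> ((\<lambda>k. Hfun lam f l u (x k)) \<longlonglongrightarrow> Hfun lam f l u p)"
    if cp: "cluster_point x p" for p
  proof -
    obtain r where r: "strict_mono r" "(x \<circ> r) \<longlonglongrightarrow> p" using cp unfolding cluster_point_def by blast
    interpret a3: A3 lam L mu om l u f g w x K p r
      by (rule A3.intro, rule a2.A2_axioms, rule A3_axioms.intro, rule r(1), rule r(2))
    show ?thesis using a3.local_min a3.H_lim by blast
  qed
  have p4: "\<exists>p. x \<longlonglongrightarrow> p \<and> local_minimizer (Hfun lam f l u) (box_set l u) p" if omp: "0 < om"
  proof -
    obtain p r where r: "strict_mono r" "(x \<circ> r) \<longlonglongrightarrow> p"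
      using compact_imp_seq_compact[OF box_compact[of l u]] a1.x_in unfolding seq_compact_def by blast
    interpret a4: A4 lam L mu om l u f g w x K p r
      by (rule A4.intro, rule A3.intro, rule a2.A2_axioms, rule A3_axioms.intro, rule r(1), rule r(2),
          rule A4_axioms.intro, rule omp)
    show ?thesis using a4.x_conv a4.local_min by blast
  qed
  show ?thesis using bd cl p4 by blast
qed

end
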